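(* Let $x_1,\ldots,x_n$ be real numbers, $s_k=\sum_{i=1}^k x_i$, and let $\hat s_1=s_1$, $\hat s_k=(\hat s_{k-1}+x_k)(1+\delta_k)$ for $2\le k\le n$, where $\delta_2,\ldots,\delta_n$ are independent random variables with mean zero and $|\delta_k|\le u$, with $0<u<1$. Let $E_n=\hat s_n-s_n$ and $\mathbf{s}_n=[s_2,\ldots,s_n]$. Then for any $\delta\in(0,1)$, with probability at least $1-\delta$, \[ |E_n| \le u\,\|\mathbf{s}_n\|_2\,\lambda(\delta/2)\,\bigl(1+\tilde\gamma_n(\delta/2)\bigr). \]
   Context: For $\delta\in(0,1)$, $\lambda(\delta)=\sqrt{2\log(2/\delta)}$ and $\tilde\gamma_n(\delta)=\exp\!\left(\frac{\lambda(\delta)\sqrt{n}\,u+nu^2}{1-u}\right)-1$. The recurrence models recursive summation in floating-point arithmetic with unit roundoff $u$; $\delta_k$ is the relative rounding error at step $k$. *)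

theory Defs
  imports "HOL-Probability.Probability"
begin

definition lam :: "real \<Rightarrow> real" where
  "lam \<delta> = sqrt (2 * ln (2 / \<delta>))"

definition gamma_tilde :: "nat \<Rightarrow> real \<Rightarrow> real \<Rightarrow> real" where
  "gamma_tilde n u \<delta> =
     exp ((lam \<delta> * sqrt (real n) * u + real n * u\<^sup>2) / (1 - u)) - 1"

definition psum :: "(nat \<Rightarrow> real) \<Rightarrow> nat \<Rightarrow> real" where
  "psum x k = (\<Sum>i=1..k. x i)"

text \<open>Computed partial sums: shat 1 = x 1, shat k = (shat (k-1) + x k)(1 + d k) for k >= 2.
  The value at index 0 is an unused filler.\<close>
fun shat :: "(nat \<Rightarrow> real) \<Rightarrow> (nat \<Rightarrow> real) \<Rightarrow> nat \<Rightarrow> real" where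
  "shat x d 0 = 0"
| "shat x d (Suc 0) = x 1"
| "shat x d (Suc (Suc k)) = (shat x d (Suc k) + x (Suc (Suc k))) * (1 + d (Suc (Suc k)))"

end

theory Submission
  imports Defs
begin



lemma shat_err:
  assumes "n \<ge> 1"
  shows "shat x D n - psum x n = (\<Sum>k\<in>{2..n}. psum x k * D k * (\<Prod>j\<in>{Suc k..n}. 1 + D j))"
  using assms
proof (induction n rule: nat_induct_at_least)
  case base
  then show ?case by (simp add: psum_def)
next
  case (Suc n)
  then obtain m where m: "n = Suc m" by (cases n) auto
  have ps: "psum x (Suc n) = psum x n + x (Suc n)" by (simp add: psum_def)
  have sh: "shat x D (Suc n) = (shat x D n + x (Suc n)) * (1 + D (Suc n))" by (simp add: m)
  have "(\<Sum>k\<in>{2..Suc n}. psum x k * D k * (\<Prod>j\<in>{Suc k..Suc n}. 1 + D j))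
     = (\<Sum>k\<in>{2..n}. psum x k * D k * (\<Prod>j\<in>{Suc k..Suc n}. 1 + D j)) + psum x (Suc n) * D (Suc n)"
    using Suc.hyps by (simp add: sum.cl_ivl_Suc)
  also have "(\<Sum>k\<in>{2..n}. psum x k * D k * (\<Prod>j\<in>{Suc k..Suc n}. 1 + D j))
     = (\<Sum>k\<in>{2..n}. psum x k * D k * (\<Prod>j\<in>{Suc k..n}. 1 + D j)) * (1 + D (Suc n))"
    by (simp add: sum_distrib_right prod.cl_ivl_Suc mult.assoc)
  finally show ?case using Suc.IH sh ps by (simp add: algebra_simps)
qed



lemma hoeff_coord:
  fixes N :: "real measure"
  assumes PS: "prob_space N" and SB: "sets N = sets borel"
    and AE: "AE z in N. z \<in> {-u..u}" and E0: "integral\<^sup>L N (\<lambda>z. z) = 0"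
  shows "(\<integral>\<^sup>+z. exp (l*z) \<partial>N) \<le> ennreal (exp (l\<^sup>2*u\<^sup>2/2))"
proof -
  interpret prob_space N by fact
  have eq: "(u - - u)\<^sup>2 / 8 = u\<^sup>2/2" by (simp add: power2_eq_square field_simps)
  consider "l > 0" | "l < 0" | "l = 0" by linarith
  then show ?thesis
  proof cases
    case 1
    have rv: "(\<lambda>z. z) \<in> measurable N borel" by (rule measurable_ident_sets[OF SB])
    interpret interval_bounded_random_variable N "\<lambda>z. z" "-u" u
      by unfold_locales (rule rv, rule AE)
    show ?thesis using Hoeffdings_lemma_nn_integral_0[OF 1 E0] by (simp add: eq mult.assoc)
  next
    case 2
    have rv: "(\<lambda>z. z) \<in> measurable N borel" by (rule measurable_ident_sets[OF SB])
    have rv2: "(\<lambda>z. - z) \<in> measurable N borel" using rv by measurable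
    have AE2: "AE z in N. - z \<in> {-u..u}" by (rule eventually_mono[OF AE]) auto
    interpret interval_bounded_random_variable N "\<lambda>z. - z" "-u" u
      by unfold_locales (rule rv2, rule AE2)
    have "(\<integral>\<^sup>+z. exp ((-l)*(-z)) \<partial>N) \<le> ennreal (exp ((-l)\<^sup>2*(u - - u)\<^sup>2/8))"
      using 2 E0 by (intro Hoeffdings_lemma_nn_integral_0) (auto simp: integral_minus)
    then show ?thesis by (simp add: eq mult.assoc)
  next
    case 3
    then show ?thesis by (simp add: emeasure_space_1)
  qed
qed



lemma azuma_nn:
  fixes N :: "nat \<Rightarrow> real measure" and g :: "nat \<Rightarrow> (nat \<Rightarrow> real) \<Rightarrow> real" and c :: "nat \<Rightarrow> real"
  assumes PS: "\<And>i. prob_space (N i)" and SB: "\<And>i. sets (N i) = sets borel"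
    and H: "\<And>i l. i \<in> {lo..n} \<Longrightarrow> (\<integral>\<^sup>+z. exp (l*z) \<partial>N i) \<le> ennreal (exp (l\<^sup>2*u\<^sup>2/2))"
    and gm: "\<And>k J. k \<in> {lo..n} \<Longrightarrow> {Suc k..n} \<subseteq> J \<Longrightarrow> g k \<in> borel_measurable (PiM J N)"
    and gd: "\<And>k y y'. k \<in> {lo..n} \<Longrightarrow> (\<forall>j\<in>{Suc k..n}. y j = y' j) \<Longrightarrow> g k y = g k y'"
    and gb: "\<And>k y. k \<in> {lo..n} \<Longrightarrow> \<bar>g k y\<bar> \<le> c k"
    and m: "lo \<le> m"
  shows "(\<integral>\<^sup>+y. exp (\<theta> * (\<Sum>k\<in>{m..n}. y k * g k y)) \<partial>PiM {m..n} N)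
           \<le> ennreal (exp (\<theta>\<^sup>2*u\<^sup>2/2 * (\<Sum>k\<in>{m..n}. (c k)\<^sup>2)))"
proof -
  interpret product_sigma_finite N
    by (simp add: product_sigma_finite_def PS prob_space_imp_sigma_finite)
  have comp: "(\<lambda>y. y k) \<in> borel_measurable (PiM J N)" if "k \<in> J" for k J
    using measurable_component_singleton[OF that, of N] measurable_cong_sets[OF refl SB] by blast
  have meas: "(\<lambda>y. \<theta> * (\<Sum>k\<in>{m..n}. y k * g k y)) \<in> borel_measurable (PiM {m..n} N)"
    if "lo \<le> m" for m
    using that by (intro borel_measurable_times borel_measurable_const borel_measurable_sum borel_measurable_times comp gm) auto
  define P where "P m \<longleftrightarrow> (\<integral>\<^sup>+y. exp (\<theta> * (\<Sum>k\<in>{m..n}. y k * g k y)) \<partial>PiM {m..n} N)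
           \<le> ennreal (exp (\<theta>\<^sup>2*u\<^sup>2/2 * (\<Sum>k\<in>{m..n}. (c k)\<^sup>2)))" for m
  have base0: "P m" if "n < m" for m
    using that by (simp add: P_def PiM_empty)
  have step: "P m" if lm: "lo \<le> m" and mn: "m \<le> n" and IH: "P (Suc m)" for m
  proof -
    have ins: "{m..n} = insert m {Suc m..n}" using mn by auto
    define R where "R x = (\<Sum>k\<in>{Suc m..n}. x k * g k x)" for x
    define K where "K = exp (\<theta>\<^sup>2*u\<^sup>2/2 * (c m)\<^sup>2)"
    have measR: "(\<lambda>x. \<theta> * R x) \<in> borel_measurable (PiM {Suc m..n} N)"
      unfolding R_def using meas[of "Suc m"] lm by simp
    have measF: "(\<lambda>y. ennreal (exp (\<theta> * (\<Sum>k\<in>insert m {Suc m..n}. y k * g k y)))) \<in> borel_measurable (PiM (insert m {Suc m..n}) N)"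
      using meas[OF lm] unfolding ins by measurable
    have upd: "exp (\<theta> * (\<Sum>k\<in>{m..n}. (x(m:=z)) k * g k (x(m:=z)))) = exp ((\<theta> * g m x) * z) * exp (\<theta> * R x)" for x z
    proof -
      have g1: "g m (x(m:=z)) = g m x" using lm mn by (intro gd) auto
      have g2: "(\<Sum>k\<in>{Suc m..n}. (x(m:=z)) k * g k (x(m:=z))) = R x"
        unfolding R_def
      proof (rule sum.cong[OF refl])
        fix k assume k: "k \<in> {Suc m..n}"
        have "g k (x(m:=z)) = g k x" using k lm by (intro gd) auto
        then show "(x(m:=z)) k * g k (x(m:=z)) = x k * g k x" using k by auto
      qed
      show ?thesis unfolding ins using g1 g2 by (simp add: exp_add[symmetric] algebra_simps)
    qed
    have inner: "(\<integral>\<^sup>+z. ennreal (exp (\<theta> * (\<Sum>k\<in>{m..n}. (x(m:=z)) k * g k (x(m:=z))))) \<partial>N m)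
               \<le> ennreal K * ennreal (exp (\<theta> * R x))" for x
    proof -
      have "(\<integral>\<^sup>+z. ennreal (exp (\<theta> * (\<Sum>k\<in>{m..n}. (x(m:=z)) k * g k (x(m:=z))))) \<partial>N m)
          = (\<integral>\<^sup>+z. ennreal (exp ((\<theta> * g m x) * z)) * ennreal (exp (\<theta> * R x)) \<partial>N m)"
        by (intro nn_integral_cong, unfold upd, rule ennreal_mult) auto
      also have "\<dots> = (\<integral>\<^sup>+z. ennreal (exp ((\<theta> * g m x) * z)) \<partial>N m) * ennreal (exp (\<theta> * R x))"
        by (rule nn_integral_multc) (simp add: measurable_cong_sets[OF SB refl])
      also have "\<dots> \<le> ennreal (exp ((\<theta> * g m x)\<^sup>2*u\<^sup>2/2)) * ennreal (exp (\<theta> * R x))"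
        by (rule mult_right_mono[OF H]) (use lm mn in auto)
      also have "\<dots> \<le> ennreal K * ennreal (exp (\<theta> * R x))"
      proof (intro mult_right_mono ennreal_leI)
        have "\<bar>g m x\<bar> \<le> c m" using gb lm mn by auto
        then have "(g m x)\<^sup>2 \<le> (c m)\<^sup>2" by (metis abs_ge_zero power2_abs power_mono)
        have "(\<theta> * g m x)\<^sup>2*u\<^sup>2/2 = \<theta>\<^sup>2*u\<^sup>2/2 * (g m x)\<^sup>2" by (simp add: power_mult_distrib)
        also have "\<dots> \<le> \<theta>\<^sup>2*u\<^sup>2/2 * (c m)\<^sup>2" by (rule mult_left_mono) (use \<open>(g m x)\<^sup>2 \<le> (c m)\<^sup>2\<close> in auto)
        finally have "(\<theta> * g m x)\<^sup>2*u\<^sup>2/2 \<le> \<theta>\<^sup>2*u\<^sup>2/2 * (c m)\<^sup>2" .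
        then show "exp ((\<theta> * g m x)\<^sup>2*u\<^sup>2/2) \<le> K" unfolding K_def by (rule exp_mono)
      qed simp
      finally show ?thesis .
    qed
    have "(\<integral>\<^sup>+y. exp (\<theta> * (\<Sum>k\<in>{m..n}. y k * g k y)) \<partial>PiM {m..n} N)
        = (\<integral>\<^sup>+x. (\<integral>\<^sup>+z. ennreal (exp (\<theta> * (\<Sum>k\<in>{m..n}. (x(m:=z)) k * g k (x(m:=z))))) \<partial>N m) \<partial>PiM {Suc m..n} N)"
      unfolding ins by (rule product_nn_integral_insert[OF _ _ measF]) auto
    also have "\<dots> \<le> (\<integral>\<^sup>+x. ennreal K * ennreal (exp (\<theta> * R x)) \<partial>PiM {Suc m..n} N)"
      by (rule nn_integral_mono) (rule inner)
    also have "\<dots> = ennreal K * (\<integral>\<^sup>+x. ennreal (exp (\<theta> * R x)) \<partial>PiM {Suc m..n} N)"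
      by (rule nn_integral_cmult) (use measR in measurable)
    also have "\<dots> \<le> ennreal K * ennreal (exp (\<theta>\<^sup>2*u\<^sup>2/2 * (\<Sum>k\<in>{Suc m..n}. (c k)\<^sup>2)))"
      using IH unfolding P_def R_def by (intro mult_left_mono) auto
    also have "\<dots> = ennreal (exp (\<theta>\<^sup>2*u\<^sup>2/2 * (\<Sum>k\<in>{m..n}. (c k)\<^sup>2)))"
      unfolding K_def ins by (simp add: ennreal_mult[symmetric] exp_add[symmetric] algebra_simps)
    finally show ?thesis unfolding P_def .
  qed
  have "lo \<le> k \<longrightarrow> P k" if "k \<le> Suc n" for k
    using that
  proof (induction k rule: inc_induct)
    case base then show ?case by (intro impI base0) simp
  next
    case (step k)
    then show ?case using \<open>\<And>m. lo \<le> m \<Longrightarrow> m \<le> n \<Longrightarrow> P (Suc m) \<Longrightarrow> P m\<close> by auto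
  qed
  then have "P m" using m base0 by (cases "m \<le> Suc n") auto
  then show ?thesis unfolding P_def .
qed



lemma tail_bound:
  assumes PS: "prob_space Q" and Fm: "F \<in> borel_measurable Q" and th: "\<theta> > 0"
    and I: "(\<integral>\<^sup>+y. exp (\<theta> * F y) \<partial>Q) \<le> ennreal (exp V)"
  shows "measure Q {y\<in>space Q. F y > a} \<le> exp (V - \<theta> * a)"
proof -
  interpret prob_space Q by fact
  let ?S = "{y\<in>space Q. F y > a}"
  have Sm: "?S \<in> sets Q" using Fm by measurable
  have "emeasure Q ?S = (\<integral>\<^sup>+y. indicator ?S y \<partial>Q)" using Sm by simp
  also have "\<dots> \<le> (\<integral>\<^sup>+y. ennreal (exp (\<theta> * F y)) * ennreal (exp (- \<theta> * a)) \<partial>Q)"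
  proof (rule nn_integral_mono)
    fix y assume y: "y \<in> space Q"
    show "indicator ?S y \<le> ennreal (exp (\<theta> * F y)) * ennreal (exp (- \<theta> * a))"
    proof (cases "F y > a")
      case True
      then have "0 \<le> \<theta> * F y + - \<theta> * a" using th
        by (simp add: algebra_simps mult_left_mono)
      then have "1 \<le> exp (\<theta> * F y + - \<theta> * a)" by simp
      moreover have "exp (\<theta> * F y) * exp (- \<theta> * a) = exp (\<theta> * F y + - \<theta> * a)" by (rule exp_add[symmetric])
      ultimately have "1 \<le> exp (\<theta> * F y) * exp (- \<theta> * a)" by linarith
      then show ?thesis using y True by (simp add: ennreal_mult[symmetric] indicator_def)
    qed (simp add: indicator_def)
  qed
  also have "\<dots> = (\<integral>\<^sup>+y. ennreal (exp (\<theta> * F y)) \<partial>Q) * ennreal (exp (- \<theta> * a))"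
    by (rule nn_integral_multc) (use Fm in measurable)
  also have "\<dots> \<le> ennreal (exp V) * ennreal (exp (- \<theta> * a))"
    by (rule mult_right_mono[OF I]) simp
  also have "\<dots> = ennreal (exp (V - \<theta> * a))"
    by (simp add: ennreal_mult[symmetric] exp_add[symmetric])
  finally have "emeasure Q ?S \<le> ennreal (exp (V - \<theta> * a))" .
  then show ?thesis by (simp add: emeasure_eq_measure)
qed

lemma Q_lemma:
  fixes y :: "nat \<Rightarrow> real"
  assumes j0: "j0 \<in> {2..n}" and R: "(\<Sum>i\<in>{j0..n}. y i) > a"
  shows "(\<Sum>k\<in>{2..n}. y k * (if \<forall>j\<in>{Suc k..n}. (\<Sum>i\<in>{j..n}. y i) \<le> a then 1 else 0)) > a"
proof -
  define J where "J = {j\<in>{2..n}. (\<Sum>i\<in>{j..n}. y i) > a}"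
  have fin: "finite J" "J \<noteq> {}" using j0 R unfolding J_def by auto
  define js where "js = Max J"
  have js: "js \<in> J" using fin unfolding js_def by (rule Max_in)
  have jmax: "j \<le> js" if "j \<in> J" for j using fin that unfolding js_def by simp
  have ind: "(\<forall>j\<in>{Suc k..n}. (\<Sum>i\<in>{j..n}. y i) \<le> a) \<longleftrightarrow> js \<le> k" if k: "k \<in> {2..n}" for k
  proof
    assume H: "\<forall>j\<in>{Suc k..n}. (\<Sum>i\<in>{j..n}. y i) \<le> a"
    show "js \<le> k"
    proof (rule ccontr)
      assume "\<not> js \<le> k"
      then have "js \<in> {Suc k..n}" using js unfolding J_def by auto
      then show False using H js unfolding J_def by force
    qed
  next
    assume "js \<le> k"
    show "\<forall>j\<in>{Suc k..n}. (\<Sum>i\<in>{j..n}. y i) \<le> a"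
    proof
      fix j assume j: "j \<in> {Suc k..n}"
      have "j \<notin> J" using jmax[of j] j \<open>js \<le> k\<close> by auto
      then show "(\<Sum>i\<in>{j..n}. y i) \<le> a" using j k unfolding J_def by auto
    qed
  qed
  have "(\<Sum>k\<in>{2..n}. y k * (if \<forall>j\<in>{Suc k..n}. (\<Sum>i\<in>{j..n}. y i) \<le> a then 1 else 0))
      = (\<Sum>k\<in>{2..n}. if js \<le> k then y k else 0)"
    by (rule sum.cong) (auto simp: ind)
  also have "\<dots> = (\<Sum>k\<in>{k\<in>{2..n}. js \<le> k}. y k)"
    by (rule sum.inter_filter[symmetric]) simp
  also have "{k\<in>{2..n}. js \<le> k} = {js..n}" using js unfolding J_def by auto
  finally show ?thesis using js unfolding J_def by simp
qed

lemma exp_param: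
  assumes "(w::real) > 0" "L > 0"
  shows "exp ((L / w)\<^sup>2 * w\<^sup>2 / 2 - (L / w) * (L * w)) = exp (- L\<^sup>2/2)"
  using assms by (simp add: power2_eq_square field_simps)




lemma comp_meas:
  fixes N :: "nat \<Rightarrow> real measure"
  assumes SB: "\<And>i. sets (N i) = sets borel" and k: "k \<in> J"
  shows "(\<lambda>y. y k) \<in> borel_measurable (PiM J N)"
  using measurable_component_singleton[OF k, of N] measurable_cong_sets[OF refl SB] by blast

lemma sum_meas:
  fixes N :: "nat \<Rightarrow> real measure"
  assumes SB: "\<And>i. sets (N i) = sets borel" and S: "S \<subseteq> J"
  shows "(\<lambda>y. \<Sum>i\<in>S. y i) \<in> borel_measurable (PiM J N)"
  using S by (intro borel_measurable_sum comp_meas[OF SB]) auto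

lemma prod_meas:
  fixes N :: "nat \<Rightarrow> real measure"
  assumes SB: "\<And>i. sets (N i) = sets borel" and S: "S \<subseteq> J"
  shows "(\<lambda>y. \<Prod>i\<in>S. 1 + y i) \<in> borel_measurable (PiM J N)"
  using S by (intro borel_measurable_prod borel_measurable_add borel_measurable_const comp_meas[OF SB]) auto

lemma azuma_tail:
  fixes N :: "nat \<Rightarrow> real measure" and g :: "nat \<Rightarrow> (nat \<Rightarrow> real) \<Rightarrow> real" and c :: "nat \<Rightarrow> real"
  assumes PS: "\<And>i. prob_space (N i)" and SB: "\<And>i. sets (N i) = sets borel"
    and H: "\<And>i l. i \<in> {lo..n} \<Longrightarrow> (\<integral>\<^sup>+z. exp (l*z) \<partial>N i) \<le> ennreal (exp (l\<^sup>2*u\<^sup>2/2))"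
    and gm: "\<And>k J. k \<in> {lo..n} \<Longrightarrow> {Suc k..n} \<subseteq> J \<Longrightarrow> g k \<in> borel_measurable (PiM J N)"
    and gd: "\<And>k y y'. k \<in> {lo..n} \<Longrightarrow> (\<forall>j\<in>{Suc k..n}. y j = y' j) \<Longrightarrow> g k y = g k y'"
    and gb: "\<And>k y. k \<in> {lo..n} \<Longrightarrow> \<bar>g k y\<bar> \<le> c k"
    and w: "w > 0" and L: "L > 0" and cw: "u\<^sup>2 * (\<Sum>k\<in>{lo..n}. (c k)\<^sup>2) \<le> w\<^sup>2"
  shows "measure (PiM {lo..n} N) {y\<in>space (PiM {lo..n} N). (\<Sum>k\<in>{lo..n}. y k * g k y) > L * w} \<le> exp (-L\<^sup>2/2)"
proof -
  define \<theta> where "\<theta> = L / w"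
  have th: "\<theta> > 0" using w L unfolding \<theta>_def by simp
  have Fm: "(\<lambda>y. \<Sum>k\<in>{lo..n}. y k * g k y) \<in> borel_measurable (PiM {lo..n} N)"
    by (intro borel_measurable_sum borel_measurable_times comp_meas[OF SB] gm) auto
  have "(\<integral>\<^sup>+y. exp (\<theta> * (\<Sum>k\<in>{lo..n}. y k * g k y)) \<partial>PiM {lo..n} N)
           \<le> ennreal (exp (\<theta>\<^sup>2*u\<^sup>2/2 * (\<Sum>k\<in>{lo..n}. (c k)\<^sup>2)))"
    by (rule azuma_nn[OF PS SB H gm gd gb]) auto
  also have "\<dots> \<le> ennreal (exp (\<theta>\<^sup>2 * w\<^sup>2 / 2))"
  proof (intro ennreal_leI exp_mono)
    have "\<theta>\<^sup>2*u\<^sup>2/2 * (\<Sum>k\<in>{lo..n}. (c k)\<^sup>2) = \<theta>\<^sup>2/2 * (u\<^sup>2 * (\<Sum>k\<in>{lo..n}. (c k)\<^sup>2))" by simp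
    also have "\<dots> \<le> \<theta>\<^sup>2/2 * w\<^sup>2" using cw by (simp add: mult_left_mono)
    finally show "\<theta>\<^sup>2*u\<^sup>2/2 * (\<Sum>k\<in>{lo..n}. (c k)\<^sup>2) \<le> \<theta>\<^sup>2 * w\<^sup>2 / 2" by simp
  qed
  finally have I: "(\<integral>\<^sup>+y. exp (\<theta> * (\<Sum>k\<in>{lo..n}. y k * g k y)) \<partial>PiM {lo..n} N) \<le> ennreal (exp (\<theta>\<^sup>2 * w\<^sup>2 / 2))" .
  have PSP: "prob_space (PiM {lo..n} N)" by (intro prob_space_PiM PS)
  have "measure (PiM {lo..n} N) {y\<in>space (PiM {lo..n} N). (\<Sum>k\<in>{lo..n}. y k * g k y) > L * w}
     \<le> exp (\<theta>\<^sup>2 * w\<^sup>2 / 2 - \<theta> * (L * w))"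
    by (rule tail_bound[OF PSP Fm th I])
  also have "\<dots> = exp (-L\<^sup>2/2)" unfolding \<theta>_def by (rule exp_param[OF w L])
  finally show ?thesis .
qed



theorem theorem3p3:
  fixes M :: "'a measure" and x :: "nat \<Rightarrow> real" and d :: "nat \<Rightarrow> 'a \<Rightarrow> real"
    and n :: nat and u \<delta> :: real
  assumes "prob_space M"
    and "n \<ge> 1"
    and "0 < u" and "u < 1"
    and "\<And>k. k \<in> {2..n} \<Longrightarrow> d k \<in> borel_measurable M"
    and "prob_space.indep_vars M (\<lambda>_. borel) d {2..n}"
    and "\<And>k. k \<in> {2..n} \<Longrightarrow> prob_space.expectation M (d k) = 0"
    and "\<And>k \<omega>. k \<in> {2..n} \<Longrightarrow> \<omega> \<in> space M \<Longrightarrow> \<bar>d k \<omega>\<bar> \<le> u"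
    and "0 < \<delta>" and "\<delta> < 1"
  shows "measure M {\<omega> \<in> space M.
           \<bar>shat x (\<lambda>k. d k \<omega>) n - psum x n\<bar>
             \<le> u * sqrt (\<Sum>k=2..n. (psum x k)\<^sup>2) * lam (\<delta> / 2) * (1 + gamma_tilde n u (\<delta> / 2))}
         \<ge> 1 - \<delta>"
proof -
  note PSM = assms(1) and n1 = assms(2) and u0 = assms(3) and u1 = assms(4) and dm = assms(5)
    and ind = assms(6) and E0 = assms(7) and db = assms(8) and d0 = assms(9) and d1 = assms(10)
  interpret M: prob_space M by fact
  define S2 where "S2 = (\<Sum>k=2..n. (psum x k)\<^sup>2)"
  define L where "L = lam (\<delta> / 2)"
  define C where "C = 1 + gamma_tilde n u (\<delta> / 2)"
  define B where "B = u * sqrt S2 * L * C"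
  define Gd where "Gd = {\<omega> \<in> space M. \<bar>shat x (\<lambda>k. d k \<omega>) n - psum x n\<bar> \<le> B}"
  define E' where "E' y = (\<Sum>k\<in>{2..n}. psum x k * y k * (\<Prod>j\<in>{Suc k..n}. 1 + y j))" for y :: "nat \<Rightarrow> real"
  have err: "shat x (\<lambda>k. d k \<omega>) n - psum x n = E' (\<lambda>k. d k \<omega>)" for \<omega>
    unfolding E'_def by (rule shat_err[OF n1])
  have S2nn: "S2 \<ge> 0" unfolding S2_def by (intro sum_nonneg) auto
  have ln4: "ln (4 / \<delta>) > 0" using d0 d1 by simp
  have L2: "L\<^sup>2 = 2 * ln (4 / \<delta>)" unfolding L_def lam_def using ln4 by simp
  have Lpos: "L > 0" unfolding L_def lam_def using ln4 by simp
  have eL: "exp (- L\<^sup>2/2) = \<delta> / 4"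
  proof -
    have "exp (- L\<^sup>2/2) = exp (- ln (4/\<delta>))" by (simp add: L2)
    also have "\<dots> = \<delta> / 4" using d0 by (simp add: exp_minus)
    finally show ?thesis .
  qed
  have Cexp: "C = exp ((L * sqrt (real n) * u + real n * u\<^sup>2) / (1 - u))"
    unfolding C_def gamma_tilde_def L_def by simp
  have Cpos: "C > 0" unfolding Cexp by simp
  define a where "a = L * (u * sqrt (real n))"
  have a0: "a \<ge> 0" unfolding a_def using Lpos u0 by simp
  have aC: "exp a \<le> C"
  proof -
    have "a \<le> a / (1 - u)" using a0 u0 u1 by (simp add: divide_simps mult_left_le)
    also have "\<dots> \<le> (L * sqrt (real n) * u + real n * u\<^sup>2) / (1 - u)"
      using u1 unfolding a_def by (intro divide_right_mono) (auto simp: algebra_simps)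
    finally show ?thesis unfolding Cexp by simp
  qed
  show ?thesis
  proof (cases "S2 = 0")
    case True
    have sz: "psum x k = 0" if "k \<in> {2..n}" for k
      using True that unfolding S2_def by (subst (asm) sum_nonneg_eq_0_iff) auto
    have "Gd = space M" unfolding Gd_def B_def err E'_def using True by (auto simp: sz)
    then show ?thesis using M.prob_space d0 unfolding Gd_def B_def S2_def L_def C_def by simp
  next
    case False
    then have S2pos: "S2 > 0" using S2nn by simp
    have n2: "n \<ge> 2"
    proof (rule ccontr)
      assume "\<not> n \<ge> 2"
      then have "{2..n} = {}" by auto
      then show False using False unfolding S2_def by simp
    qed
    define I where "I = {2..n}"
    define N where "N i = (if i \<in> I then distr M borel (d i) else return borel 0)" for i
    have PS: "\<And>i. prob_space (N i)"
      unfolding N_def by (auto intro!: M.prob_space_distr prob_space_return simp: dm I_def)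
    have SB: "\<And>i. sets (N i) = sets borel" unfolding N_def by auto
    have H: "(\<integral>\<^sup>+z. exp (l*z) \<partial>N i) \<le> ennreal (exp (l\<^sup>2*u\<^sup>2/2))" if i: "i \<in> {2..n}" for i l
    proof -
      have Ni: "N i = distr M borel (d i)" using i unfolding N_def I_def by simp
      have AE: "AE z in N i. z \<in> {-u..u}" unfolding Ni
      proof (subst AE_distr_iff)
        show "d i \<in> borel_measurable M" using dm i .
        show "{z \<in> space borel. z \<in> {-u..u}} \<in> sets borel" by simp
        show "AE \<omega> in M. d i \<omega> \<in> {-u..u}" using db[OF i] by (intro AE_I2) (force simp: abs_le_iff)
      qed
      have EZ: "integral\<^sup>L (N i) (\<lambda>z. z) = 0"
        unfolding Ni using integral_distr[of "d i" M borel "\<lambda>z. z"] E0[OF i] dm[OF i] by simp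
      show ?thesis by (rule hoeff_coord[OF PS SB AE EZ])
    qed
    define X where "X \<omega> = (\<lambda>i\<in>I. d i \<omega>)" for \<omega>
    have dmN: "d i \<in> measurable M (N i)" if "i \<in> I" for i
      using dm[of i] that measurable_cong_sets[OF refl SB[of i], of M] unfolding I_def by simp
    have Xm: "X \<in> measurable M (PiM I N)" unfolding X_def
      by (rule measurable_restrict) (rule dmN)
    have distrX: "distr M (PiM I N) X = PiM I N"
    proof -
      have "distr M (PiM I (\<lambda>_. borel)) (\<lambda>\<omega>. \<lambda>i\<in>I. d i \<omega>) = (PiM I (\<lambda>i. distr M borel (d i)))"
        using M.indep_vars_iff_distr_eq_PiM'[where I=I and M'="\<lambda>_. borel" and X=d] ind dm n2 unfolding I_def by auto
      moreover have "(PiM I (\<lambda>i. distr M borel (d i))) = PiM I N" by (rule PiM_cong) (auto simp: N_def)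
      moreover have "distr M (PiM I N) X = distr M (PiM I (\<lambda>_. borel)) (\<lambda>\<omega>. \<lambda>i\<in>I. d i \<omega>)"
        unfolding X_def by (rule distr_cong) (auto intro!: sets_PiM_cong simp: SB)
      ultimately show ?thesis by simp
    qed
    have transfer: "measure M (X -` S \<inter> space M) = measure (PiM I N) S" if "S \<in> sets (PiM I N)" for S
      using measure_distr[OF Xm that] distrX by simp
    have IN: "I = {2..n}" by (simp add: I_def)
    define P where "P k y = (\<Prod>j\<in>{Suc k..n}. 1 + y j)" for k and y :: "nat \<Rightarrow> real"
    define q where "q k y = (if \<forall>j\<in>{Suc k..n}. (\<Sum>i\<in>{j..n}. y i) \<le> a then 1 else (0::real))"
      for k and y :: "nat \<Rightarrow> real"
    define g where "g k y = psum x k * max 0 (min (P k y) C)" for k y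
    define g' where "g' k y = - g k y" for k y
    have wn: "u * sqrt (real n) > 0" using u0 n2 by simp
    have wS: "u * C * sqrt S2 > 0" using u0 Cpos S2pos by simp
    have qm: "q k \<in> borel_measurable (PiM J N)" if J: "{Suc k..n} \<subseteq> J" for k J
    proof -
      have pm: "Measurable.pred (PiM J N) (\<lambda>y. \<forall>j\<in>{Suc k..n}. (\<Sum>i\<in>{j..n}. y i) \<le> a)"
      proof (rule pred_intros_finite(3))
        fix j assume j: "j \<in> {Suc k..n}"
        have [measurable]: "(\<lambda>y. \<Sum>i\<in>{j..n}. y i) \<in> borel_measurable (PiM J N)"
          by (rule sum_meas[OF SB]) (use j J in auto)
        show "Measurable.pred (PiM J N) (\<lambda>y. (\<Sum>i\<in>{j..n}. y i) \<le> a)" by measurable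
      qed simp
      show ?thesis unfolding q_def using pm by measurable
    qed
    have T1: "measure (PiM {2..n} N) {y\<in>space (PiM {2..n} N). (\<Sum>k\<in>{2..n}. y k * q k y) > L * (u * sqrt (real n))}
              \<le> exp (-L\<^sup>2/2)"
    proof (rule azuma_tail[OF PS SB H, where c="\<lambda>_. 1"])
      fix k J assume k: "k \<in> {2..n}" and J: "{Suc k..n} \<subseteq> J"
      have pm: "Measurable.pred (PiM J N) (\<lambda>y. \<forall>j\<in>{Suc k..n}. (\<Sum>i\<in>{j..n}. y i) \<le> a)"
      proof (rule pred_intros_finite(3))
        fix j assume j: "j \<in> {Suc k..n}"
        have [measurable]: "(\<lambda>y. \<Sum>i\<in>{j..n}. y i) \<in> borel_measurable (PiM J N)"
          by (rule sum_meas[OF SB]) (use j J in auto)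
        show "Measurable.pred (PiM J N) (\<lambda>y. (\<Sum>i\<in>{j..n}. y i) \<le> a)" by measurable
      qed simp
      show "q k \<in> borel_measurable (PiM J N)" unfolding q_def using pm by measurable
    next
      fix k and y y' :: "nat \<Rightarrow> real" assume k: "k \<in> {2..n}" and e: "\<forall>j\<in>{Suc k..n}. y j = y' j"
      have "\<And>j. j \<in> {Suc k..n} \<Longrightarrow> (\<Sum>i\<in>{j..n}. y i) = (\<Sum>i\<in>{j..n}. y' i)"
        using e by (intro sum.cong) auto
      then show "q k y = q k y'" unfolding q_def by (metis (no_types, lifting))
    next
      fix k y show "\<bar>q k y\<bar> \<le> 1" unfolding q_def by simp
    next
      show "u * sqrt (real n) > 0" by (rule wn)
      show "L > 0" by (rule Lpos)
      have "(\<Sum>k\<in>{2..n}. (1::real)\<^sup>2) = real (n - 1)" by simp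
      moreover have "(u * sqrt (real n))\<^sup>2 = u\<^sup>2 * real n" by (simp add: power_mult_distrib)
      ultimately show "u\<^sup>2 * (\<Sum>k\<in>{2..n}. ((\<lambda>_. 1::real) k)\<^sup>2) \<le> (u * sqrt (real n))\<^sup>2"
        by (simp add: mult_left_mono)
    qed
    have Pm: "P k \<in> borel_measurable (PiM J N)" if "{Suc k..n} \<subseteq> J" for k J
      unfolding P_def by (rule prod_meas[OF SB that])
    have Pd: "P k y = P k y'" if "\<forall>j\<in>{Suc k..n}. y j = y' j" for k y y'
      unfolding P_def using that by (intro prod.cong) auto
    have gb0: "\<bar>max 0 (min (P k y) C)\<bar> \<le> C" for k y using Cpos by auto
    have cwS: "u\<^sup>2 * (\<Sum>k\<in>{2..n}. (\<bar>psum x k\<bar> * C)\<^sup>2) \<le> (u * C * sqrt S2)\<^sup>2"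
    proof -
      have "(\<Sum>k\<in>{2..n}. (\<bar>psum x k\<bar> * C)\<^sup>2) = C\<^sup>2 * S2"
        unfolding S2_def by (simp add: power_mult_distrib sum_distrib_left mult.commute)
      then show ?thesis using S2nn by (simp add: power_mult_distrib)
    qed
    have T2: "measure (PiM {2..n} N) {y\<in>space (PiM {2..n} N). (\<Sum>k\<in>{2..n}. y k * g k y) > L * (u * C * sqrt S2)}
              \<le> exp (-L\<^sup>2/2)"
    proof (rule azuma_tail[OF PS SB H, where c="\<lambda>k. \<bar>psum x k\<bar> * C"])
      fix k J assume k: "k \<in> {2..n}" and J: "{Suc k..n} \<subseteq> J"
      note Pm[OF J, measurable]
      show "g k \<in> borel_measurable (PiM J N)" unfolding g_def by measurable
    next
      fix k and y y' :: "nat \<Rightarrow> real" assume k: "k \<in> {2..n}" and e: "\<forall>j\<in>{Suc k..n}. y j = y' j"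
      show "g k y = g k y'" unfolding g_def using Pd[OF e] by simp
    next
      fix k y show "\<bar>g k y\<bar> \<le> \<bar>psum x k\<bar> * C" unfolding g_def abs_mult
        by (rule mult_left_mono[OF gb0]) simp
    qed (use wS Lpos cwS in auto)
    have T3: "measure (PiM {2..n} N) {y\<in>space (PiM {2..n} N). (\<Sum>k\<in>{2..n}. y k * g' k y) > L * (u * C * sqrt S2)}
              \<le> exp (-L\<^sup>2/2)"
    proof (rule azuma_tail[OF PS SB H, where c="\<lambda>k. \<bar>psum x k\<bar> * C"])
      fix k J assume k: "k \<in> {2..n}" and J: "{Suc k..n} \<subseteq> J"
      note Pm[OF J, measurable]
      show "g' k \<in> borel_measurable (PiM J N)" unfolding g'_def g_def by measurable
    next
      fix k and y y' :: "nat \<Rightarrow> real" assume k: "k \<in> {2..n}" and e: "\<forall>j\<in>{Suc k..n}. y j = y' j"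
      show "g' k y = g' k y'" unfolding g'_def g_def using Pd[OF e] by simp
    next
      fix k y show "\<bar>g' k y\<bar> \<le> \<bar>psum x k\<bar> * C" unfolding g'_def g_def abs_minus_cancel abs_mult
        by (rule mult_left_mono[OF gb0]) simp
    qed (use wS Lpos cwS in auto)
    have Xk: "X \<omega> k = d k \<omega>" if "k \<in> {2..n}" for k \<omega> using that unfolding X_def I_def by simp
    have E'X: "E' (\<lambda>k. d k \<omega>) = E' (X \<omega>)" for \<omega>
      unfolding E'_def by (intro sum.cong refl) (auto simp: Xk intro!: prod.cong)
    have PNI: "PiM I N = PiM {2..n} N" by (simp add: I_def)
    define F1 where "F1 y = (\<Sum>k\<in>{2..n}. y k * q k y)" for y
    define F2 where "F2 y = (\<Sum>k\<in>{2..n}. y k * g k y)" for y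
    define F3 where "F3 y = (\<Sum>k\<in>{2..n}. y k * g' k y)" for y
    define B1 where "B1 = {y\<in>space (PiM {2..n} N). F1 y > L * (u * sqrt (real n))}"
    define B2 where "B2 = {y\<in>space (PiM {2..n} N). F2 y > L * (u * C * sqrt S2)}"
    define B3 where "B3 = {y\<in>space (PiM {2..n} N). F3 y > L * (u * C * sqrt S2)}"
    have F1m: "F1 \<in> borel_measurable (PiM {2..n} N)" unfolding F1_def
      by (intro borel_measurable_sum borel_measurable_times comp_meas[OF SB] qm) auto
    have F2m: "F2 \<in> borel_measurable (PiM {2..n} N)" unfolding F2_def g_def
      by (intro borel_measurable_sum borel_measurable_times comp_meas[OF SB] borel_measurable_const
          borel_measurable_max borel_measurable_min Pm) auto
    have F3m: "F3 \<in> borel_measurable (PiM {2..n} N)" unfolding F3_def g'_def g_def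
      by (intro borel_measurable_sum borel_measurable_times comp_meas[OF SB] borel_measurable_const
          borel_measurable_uminus borel_measurable_max borel_measurable_min Pm) auto
    have B1s: "B1 \<in> sets (PiM {2..n} N)" unfolding B1_def using F1m by measurable
    have B2s: "B2 \<in> sets (PiM {2..n} N)" unfolding B2_def using F2m by measurable
    have B3s: "B3 \<in> sets (PiM {2..n} N)" unfolding B3_def using F3m by measurable
    have E'm: "E' \<in> borel_measurable (PiM {2..n} N)" unfolding E'_def
      by (intro borel_measurable_sum borel_measurable_times comp_meas[OF SB] borel_measurable_const
          prod_meas[OF SB]) auto
    have BB: "B = L * (u * C * sqrt S2)" unfolding B_def by (simp add: algebra_simps)
    have key: "X \<omega> \<in> B1 \<union> B2 \<union> B3" if \<omega>: "\<omega> \<in> space M" and nb: "\<not> \<bar>E' (X \<omega>)\<bar> \<le> B" for \<omega>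
    proof -
      define y where "y = X \<omega>"
      have ysp: "y \<in> space (PiM {2..n} N)" using measurable_space[OF Xm \<omega>] PNI unfolding y_def by simp
      have yb: "\<bar>y k\<bar> \<le> u" if "k \<in> {2..n}" for k using db[OF that \<omega>] Xk[OF that] unfolding y_def by simp
      show ?thesis
      proof (cases "\<exists>j\<in>{2..n}. (\<Sum>i\<in>{j..n}. y i) > a")
        case True
        then obtain j where j: "j \<in> {2..n}" "(\<Sum>i\<in>{j..n}. y i) > a" by blast
        have "a < F1 y" using Q_lemma[OF j] unfolding F1_def q_def .
        then have "y \<in> B1" unfolding B1_def a_def using ysp by simp
        then show ?thesis unfolding y_def by simp
      next
        case False
        have Pb: "0 \<le> P k y \<and> P k y \<le> C" if k: "k \<in> {2..n}" for k
        proof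
          have yj: "0 \<le> 1 + y j \<and> 1 + y j \<le> exp (y j)" if "j \<in> {Suc k..n}" for j
            using yb[of j] that k u1 by (auto simp: abs_le_iff exp_ge_add_one_self)
          show "0 \<le> P k y" unfolding P_def using yj by (intro prod_nonneg) auto
          have "P k y \<le> (\<Prod>j\<in>{Suc k..n}. exp (y j))" unfolding P_def using yj by (intro prod_mono) auto
          also have "\<dots> = exp (\<Sum>j\<in>{Suc k..n}. y j)" by (simp add: exp_sum)
          also have "\<dots> \<le> exp a"
          proof (cases "Suc k \<le> n")
            case True
            then have "Suc k \<in> {2..n}" using k by auto
            then have "\<not> a < (\<Sum>i\<in>{Suc k..n}. y i)" using False by blast
            then show ?thesis by simp
          next
            case False
            then show ?thesis using a0 by simp
          qed
          also have "\<dots> \<le> C" by (rule aC)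
          finally show "P k y \<le> C" .
        qed
        have gk: "g k y = psum x k * P k y" if "k \<in> {2..n}" for k
          using Pb[OF that] unfolding g_def by (simp add: max_def min_def)
        have F2E: "F2 y = E' y" unfolding F2_def E'_def P_def[symmetric]
          by (intro sum.cong refl) (simp add: gk)
        have F3E: "F3 y = - E' y" unfolding F3_def g'_def using F2E unfolding F2_def
          by (simp add: sum_negf)
        from nb have "E' y > B \<or> - E' y > B" unfolding y_def by auto
        then have "y \<in> B2 \<or> y \<in> B3" unfolding B2_def B3_def BB using F2E F3E ysp by auto
        then show ?thesis unfolding y_def by auto
      qed
    qed
    have Gd_eq: "Gd = X -` {y\<in>space (PiM I N). \<bar>E' y\<bar> \<le> B} \<inter> space M"
      unfolding Gd_def err E'X using measurable_space[OF Xm] by auto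
    have Gds: "Gd \<in> sets M" unfolding Gd_eq PNI
      by (rule measurable_sets[OF Xm[unfolded PNI]]) (use E'm in measurable)
    have sub: "space M - Gd \<subseteq> X -` (B1 \<union> B2 \<union> B3) \<inter> space M"
      using key unfolding Gd_def err E'X by auto
    have Us: "B1 \<union> B2 \<union> B3 \<in> sets (PiM I N)" using B1s B2s B3s PNI by auto
    have "measure M (space M - Gd) \<le> measure M (X -` (B1 \<union> B2 \<union> B3) \<inter> space M)"
      by (rule M.finite_measure_mono[OF sub measurable_sets[OF Xm Us]])
    also have "\<dots> = measure (PiM {2..n} N) (B1 \<union> B2 \<union> B3)" using transfer[OF Us] PNI by simp
    also have "\<dots> \<le> measure (PiM {2..n} N) (B1 \<union> B2) + measure (PiM {2..n} N) B3"
      using B1s B2s B3s by (intro measure_Un_le) auto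
    also have "\<dots> \<le> measure (PiM {2..n} N) B1 + measure (PiM {2..n} N) B2 + measure (PiM {2..n} N) B3"
      using B1s B2s by (simp add: measure_Un_le)
    also have "\<dots> \<le> \<delta>/4 + \<delta>/4 + \<delta>/4"
      using T1 T2 T3 unfolding B1_def B2_def B3_def F1_def F2_def F3_def eL by linarith
    finally have "measure M (space M - Gd) \<le> 3 * \<delta> / 4" by simp
    moreover have "measure M (space M - Gd) = 1 - measure M Gd" using M.prob_compl[OF Gds] .
    ultimately have "1 - \<delta> \<le> measure M Gd" using d0 by linarith
    then show ?thesis unfolding Gd_def B_def S2_def L_def C_def .
  qed
qed


end
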